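(* Let $L\geq 2$ and work in the setting below. Suppose $\sigma\in C^2(\mathbb{R})$ with $|\sigma(z)|\leq M_0$, $|\sigma'(z)|\leq M_1$, $|\sigma''(z)|\leq M_2$ for all $z\in\mathbb{R}$, for some $M_0,M_1,M_2>0$. Let $R>0$ and assume that the parameters $\{W_l\}_{l=1}^L$ and $\{b_l,c_l\}_{l=1}^{L-1}$ (those held fixed in each statement below) all have Frobenius norm at most $R$. Then there exist constants $C_1,\dots,C_L>0$ such that: (i) for each $l=1,\dots,L-1$, regarding $S$ as a function of $c_l$ alone with all other parameters fixed, $$\|\nabla_{c_l}S(\hat c_l)-\nabla_{c_l}S(\tilde c_l)\|_{\mathrm F}\leq C_l\|\hat c_l-\tilde c_l\|_{\mathrm F}\quad\text{for all }\hat c_l,\tilde c_l\in\mathbb{R}^{M\times N};$$ (ii) regarding $S$ as a function of $W_L$ alone with all other parameters fixed, $$\|\nabla_{W_L}S(\hat W_L)-\nabla_{W_L}S(\tilde W_L)\|_{\mathrm F}\leq C_L\|\hat W_L-\tilde W_L\|_{\mathrm F}$$ for all $\hat W_L,\tilde W_L\in\mathbb{R}^{J\times M}$ with $\|\hat W_L\|_{\mathrm F},\|\tilde W_L\|_{\mathrm F}\leq R$.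
   Context: Data: $X\in\mathbb{R}^{d\times N}$, $A\in\mathbb{R}^{J\times N}$ with one-hot columns (entries in $\{0,1\}$, each column summing to $1$), $J\geq 2$. For $\boldsymbol z\in\mathbb{R}^J$ and one-hot $\boldsymbol\alpha$, $\ell(\boldsymbol z,\boldsymbol\alpha)=-\sum_j\alpha_j\ln\big(e^{z_j}/\sum_k e^{z_k}\big)$; for $Z=[\boldsymbol z_1\cdots\boldsymbol z_N]$, $\mathcal{L}_{\mathrm{vec}}(Z,A)=[\ell(\boldsymbol z_n,\boldsymbol\alpha_n)]_{n=1}^N\in\mathbb{R}^N$. Parameters: $W_1\in\mathbb{R}^{M\times d}$, $W_2,\dots,W_{L-1}\in\mathbb{R}^{M\times M}$, $W_L\in\mathbb{R}^{J\times M}$, $b_l\in\mathbb{R}^M$, $c_l\in\mathbb{R}^{M\times N}$ ($l\le L-1$); $\sigma$ acts entrywise; $\mathbf 1\in\mathbb{R}^N$ is the all-ones vector. Weights $\omega_l=\prod_{j=l+1}^L\|W_j\|_{\mathrm F}^2$, and $$S=\|\mathcal{L}_{\mathrm{vec}}(W_L\sigma(c_{L-1}),A)\|_2^2+\sum_{l=2}^{L-1}\omega_l\|W_l\sigma(c_{l-1})+b_l\mathbf 1^\top-c_l\|_{\mathrm F}^2+\omega_1\|W_1X+b_1\mathbf 1^\top-c_1\|_{\mathrm F}^2.$$ $\nabla_{c_l}S$ and $\nabla_{W_L}S$ denote the partial gradients of $S$ (with respect to the Frobenius inner product). *)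

theory Defs
  imports "HOL-Analysis.Analysis"
begin

text \<open>Matrices are Cartesian-product types: real^'n^'m is an m x n matrix;
  its norm is the Frobenius norm and its inner product the Frobenius inner product.\<close>

definition grad :: "('a::real_inner \<Rightarrow> real) \<Rightarrow> 'a \<Rightarrow> 'a" where
  "grad f x = (SOME g. (f has_derivative (\<lambda>h. g \<bullet> h)) (at x))"

definition sigm :: "(real \<Rightarrow> real) \<Rightarrow> real^'n^'m \<Rightarrow> real^'n^'m" where
  "sigm \<sigma> c = (\<chi> i j. \<sigma> (c $ i $ j))"

definition bias :: "real^'m \<Rightarrow> real^'n^'m" where
  "bias b = (\<chi> i j. b $ i)"

definition ce :: "real^'J \<Rightarrow> real^'J \<Rightarrow> real" where
  "ce z \<alpha> = - (\<Sum>j\<in>UNIV. \<alpha> $ j * ln (exp (z $ j) / (\<Sum>k\<in>UNIV. exp (z $ k))))"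

definition Lvec :: "real^'N^'J \<Rightarrow> real^'N^'J \<Rightarrow> real^'N" where
  "Lvec Z A = (\<chi> n. ce (column n Z) (column n A))"

definition onehot_cols :: "real^'N^'J \<Rightarrow> bool" where
  "onehot_cols A \<longleftrightarrow> (\<forall>n. (\<forall>j. A $ j $ n = 0 \<or> A $ j $ n = 1) \<and> (\<Sum>j\<in>UNIV. A $ j $ n) = 1)"

text \<open>omega l = prod_{j=l+1}^L ||W_j||^2, with W_L stored separately as WL and
  W_2..W_{L-1} as W.\<close>
definition omega :: "nat \<Rightarrow> (nat \<Rightarrow> real^'M^'M) \<Rightarrow> real^'M^'J \<Rightarrow> nat \<Rightarrow> real" where
  "omega L W WL l = (norm WL)^2 * (\<Prod>j\<in>{l+1..L-1}. (norm (W j))^2)"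

definition Sobj :: "(real \<Rightarrow> real) \<Rightarrow> real^'N^'d \<Rightarrow> real^'N^'J \<Rightarrow> nat \<Rightarrow>
    real^'d^'M \<Rightarrow> (nat \<Rightarrow> real^'M^'M) \<Rightarrow> real^'M^'J \<Rightarrow>
    (nat \<Rightarrow> real^'M) \<Rightarrow> (nat \<Rightarrow> real^'N^'M) \<Rightarrow> real" where
  "Sobj \<sigma> X A L W1 W WL b c =
     (norm (Lvec (WL ** sigm \<sigma> (c (L-1))) A))^2
     + (\<Sum>l\<in>{2..L-1}. omega L W WL l * (norm (W l ** sigm \<sigma> (c (l-1)) + bias (b l) - c l))^2)
     + omega L W WL 1 * (norm (W1 ** X + bias (b 1) - c 1))^2"

end

theory Submission
  imports Defs
begin

lemma inner_mat: "(X::real^'n^'m) \<bullet> Y = (\<Sum>i\<in>UNIV. \<Sum>j\<in>UNIV. X$i$j * Y$i$j)"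
  by (simp add: inner_vec_def)

lemma norm_sq_mat: "(norm (X::real^'n^'m))^2 = (\<Sum>i\<in>UNIV. \<Sum>j\<in>UNIV. (X$i$j)^2)"
proof -
  have "(norm X)^2 = X \<bullet> X" by (rule power2_norm_eq_inner)
  thus ?thesis by (simp add: inner_mat power2_eq_square)
qed

lemma entry_le_norm: "\<bar>(X::real^'n^'m)$i$j\<bar> \<le> norm X"
proof -
  have "\<bar>X$i$j\<bar> \<le> norm (X$i)" by (rule component_le_norm_cart)
  also have "\<dots> \<le> norm X" by (rule Finite_Cartesian_Product.norm_nth_le)
  finally show ?thesis .
qed

lemma norm_entry_cmp:
  fixes X :: "real^'n^'m" and Y :: "real^'q^'p"
  assumes "0 \<le> k" and "(\<Sum>i\<in>UNIV. \<Sum>j\<in>UNIV. (X$i$j)^2) \<le> k^2 * (\<Sum>i\<in>UNIV. \<Sum>j\<in>UNIV. (Y$i$j)^2)"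
  shows "norm X \<le> k * norm Y"
proof (rule power2_le_imp_le)
  show "(norm X)^2 \<le> (k * norm Y)^2" using assms(2) by (simp add: norm_sq_mat power_mult_distrib)
qed (use assms in simp)

lemma norm_entry_cmp2:
  fixes X :: "real^'n^'m" and Y :: "real^'n^'m"
  assumes "0 \<le> k" and "\<And>i j. \<bar>X$i$j\<bar> \<le> k * \<bar>Y$i$j\<bar>"
  shows "norm X \<le> k * norm Y"
proof (rule norm_entry_cmp[OF assms(1)])
  have "(X$i$j)^2 \<le> k^2 * (Y$i$j)^2" for i j
  proof -
    have "(X$i$j)^2 = \<bar>X$i$j\<bar>^2" by simp
    also have "\<dots> \<le> (k * \<bar>Y$i$j\<bar>)^2" by (rule power_mono[OF assms(2)]) simp
    finally show ?thesis by (simp add: power_mult_distrib)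
  qed
  then show "(\<Sum>i\<in>UNIV. \<Sum>j\<in>UNIV. (X$i$j)^2) \<le> k^2 * (\<Sum>i\<in>UNIV. \<Sum>j\<in>UNIV. (Y$i$j)^2)"
    by (simp add: sum_distrib_left sum_mono)
qed

lemma norm_entry_bound:
  fixes X :: "real^'n^'m"
  assumes "0 \<le> k" and "\<And>i j. \<bar>X$i$j\<bar> \<le> k"
  shows "norm X \<le> k * norm (\<chi> (i::'m) (j::'n). (1::real))"
  using norm_entry_cmp2[of k X "\<chi> i j. 1"] assms by simp

lemma norm_mult_le: "norm ((A::real^'n^'m) ** (B::real^'p^'n)) \<le> norm A * norm B"
proof (rule power2_le_imp_le)
  have "((A ** B)$i$j)^2 \<le> (\<Sum>k\<in>UNIV. (A$i$k)^2) * (\<Sum>k\<in>UNIV. (B$k$j)^2)" for i j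
    unfolding matrix_matrix_mult_def by (simp add: Cauchy_Schwarz_ineq_sum)
  hence "(\<Sum>i\<in>UNIV. \<Sum>j\<in>UNIV. ((A ** B)$i$j)^2) \<le> (\<Sum>i\<in>UNIV. \<Sum>j\<in>UNIV. (\<Sum>k\<in>UNIV. (A$i$k)^2) * (\<Sum>k\<in>UNIV. (B$k$j)^2))"
    by (intro sum_mono) auto
  also have "\<dots> = (\<Sum>i\<in>UNIV. \<Sum>k\<in>UNIV. (A$i$k)^2) * (\<Sum>j\<in>UNIV. \<Sum>k\<in>UNIV. (B$k$j)^2)"
    by (simp add: sum_product)
  also have "\<dots> = (norm A)^2 * (norm B)^2"
  proof -
    have "(\<Sum>j\<in>UNIV. \<Sum>k\<in>UNIV. (B$k$j)^2) = (\<Sum>k\<in>UNIV. \<Sum>j\<in>UNIV. (B$k$j)^2)"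
      by (rule sum.swap)
    thus ?thesis by (simp only: norm_sq_mat)
  qed
  finally show "(norm (A ** B))^2 \<le> (norm A * norm B)^2" by (simp add: norm_sq_mat power_mult_distrib)
qed simp

lemma norm_transpose: "norm (transpose (A::real^'n^'m)) = norm A"
proof -
  have "(norm (transpose A))^2 = (norm A)^2"
    unfolding norm_sq_mat transpose_def by (simp, rule sum.swap)
  thus ?thesis by (simp add: power2_eq_iff_nonneg)
qed

lemma adj1: "(Z::real^'p^'m) \<bullet> ((E::real^'n^'m) ** H) = (transpose E ** Z) \<bullet> H"
proof -
  have "Z \<bullet> (E ** H) = (\<Sum>i\<in>UNIV. \<Sum>j\<in>UNIV. \<Sum>k\<in>UNIV. Z$i$j * (E$i$k * H$k$j))"
    by (simp add: inner_mat matrix_matrix_mult_def sum_distrib_left)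
  also have "\<dots> = (\<Sum>i\<in>UNIV. \<Sum>k\<in>UNIV. \<Sum>j\<in>UNIV. Z$i$j * (E$i$k * H$k$j))"
    by (rule sum.cong[OF refl], rule sum.swap)
  also have "\<dots> = (\<Sum>k\<in>UNIV. \<Sum>i\<in>UNIV. \<Sum>j\<in>UNIV. Z$i$j * (E$i$k * H$k$j))"
    by (rule sum.swap)
  also have "\<dots> = (\<Sum>k\<in>UNIV. \<Sum>j\<in>UNIV. \<Sum>i\<in>UNIV. Z$i$j * (E$i$k * H$k$j))"
    by (rule sum.cong[OF refl], rule sum.swap)
  also have "\<dots> = (transpose E ** Z) \<bullet> H"
    by (simp add: inner_mat matrix_matrix_mult_def transpose_def sum_distrib_left mult_ac)
  finally show ?thesis .
qed

lemma adj2: "(Z::real^'p^'m) \<bullet> ((H::real^'n^'m) ** s) = (Z ** transpose s) \<bullet> H"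
proof -
  have "Z \<bullet> (H ** s) = (\<Sum>i\<in>UNIV. \<Sum>j\<in>UNIV. \<Sum>k\<in>UNIV. Z$i$j * (H$i$k * s$k$j))"
    by (simp add: inner_mat matrix_matrix_mult_def sum_distrib_left)
  also have "\<dots> = (\<Sum>i\<in>UNIV. \<Sum>k\<in>UNIV. \<Sum>j\<in>UNIV. Z$i$j * (H$i$k * s$k$j))"
    by (rule sum.cong[OF refl], rule sum.swap)
  also have "\<dots> = (Z ** transpose s) \<bullet> H"
    by (simp add: inner_mat matrix_matrix_mult_def transpose_def sum_distrib_left mult_ac)
  finally show ?thesis .
qed

lemma had_inner: "(U::real^'n^'m) \<bullet> (\<chi> i j. a i j * h$i$j) = (\<chi> i j. a i j * U$i$j) \<bullet> h"
  by (simp add: inner_mat mult_ac)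

lemma norm_sq_vec: "(norm (v::real^'n))^2 = (\<Sum>i\<in>UNIV. (v$i)^2)"
proof -
  have "(norm v)^2 = v \<bullet> v" by (rule power2_norm_eq_inner)
  thus ?thesis by (simp add: inner_vec_def power2_eq_square)
qed

lemma norm_bias: "norm (bias b :: real^'n^'m) = sqrt (real CARD('n)) * norm b"
proof -
  have "(norm (bias b :: real^'n^'m))^2 = real CARD('n) * (norm b)^2"
    unfolding norm_sq_mat norm_sq_vec bias_def by (simp add: sum_distrib_left)
  hence "norm (bias b :: real^'n^'m) = sqrt (real CARD('n) * (norm b)^2)"
    by (metis norm_ge_zero real_sqrt_unique)
  thus ?thesis by (simp add: real_sqrt_mult)
qed

definition lipgrad :: "('a::euclidean_space \<Rightarrow> real) \<Rightarrow> 'a set \<Rightarrow> real \<Rightarrow> bool" where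
  "lipgrad f D K \<longleftrightarrow> (\<forall>x. (f has_derivative (\<lambda>h. grad f x \<bullet> h)) (at x)) \<and>
     (\<forall>x\<in>D. \<forall>y\<in>D. norm (grad f x - grad f y) \<le> K * norm (x - y))"

lemma grad_eq:
  assumes "\<And>x. (f has_derivative (\<lambda>h. G x \<bullet> h)) (at x)"
  shows "grad f x = G x"
proof -
  have ex: "\<exists>g. (f has_derivative (\<lambda>h. g \<bullet> h)) (at x)" using assms by blast
  then have "(f has_derivative (\<lambda>h. grad f x \<bullet> h)) (at x)" unfolding grad_def by (rule someI_ex)
  hence eq: "(\<lambda>h. grad f x \<bullet> h) = (\<lambda>h. G x \<bullet> h)" using has_derivative_unique assms by blast
  hence "grad f x \<bullet> (grad f x - G x) = G x \<bullet> (grad f x - G x)" by metis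
  hence "(grad f x - G x) \<bullet> (grad f x - G x) = 0" by (simp add: inner_diff_left)
  thus ?thesis by simp
qed

lemma mk_lipgrad:
  assumes "\<And>x. (f has_derivative (\<lambda>h. G x \<bullet> h)) (at x)"
    and "\<And>x y. x \<in> D \<Longrightarrow> y \<in> D \<Longrightarrow> norm (G x - G y) \<le> K * norm (x - y)"
  shows "lipgrad f D K"
  unfolding lipgrad_def using grad_eq[of f G, OF assms(1)] assms by auto

lemma lipgrad_mono: "lipgrad f D K \<Longrightarrow> K \<le> K' \<Longrightarrow> lipgrad f D K'"
  unfolding lipgrad_def by (meson mult_right_mono norm_ge_zero order_trans)

lemma lipgrad_add:
  assumes "lipgrad f D K1" "lipgrad g D K2"
  shows "lipgrad (\<lambda>x. f x + g x) D (K1 + K2)"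
proof (rule mk_lipgrad[where G="\<lambda>x. grad f x + grad g x"])
  fix x
  show "((\<lambda>x. f x + g x) has_derivative (\<lambda>h. (grad f x + grad g x) \<bullet> h)) (at x)"
    using has_derivative_add[of f _ _ g] assms unfolding lipgrad_def by (simp add: inner_add_left)
next
  fix x y assume "x \<in> D" "y \<in> D"
  hence "norm (grad f x - grad f y) \<le> K1 * norm (x - y)" "norm (grad g x - grad g y) \<le> K2 * norm (x - y)"
    using assms unfolding lipgrad_def by auto
  moreover have "norm (grad f x + grad g x - (grad f y + grad g y)) \<le> norm (grad f x - grad f y) + norm (grad g x - grad g y)"
    by (metis add_diff_add norm_triangle_ineq)
  ultimately show "norm (grad f x + grad g x - (grad f y + grad g y)) \<le> (K1 + K2) * norm (x - y)"
    by (simp add: distrib_right)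
qed

lemma lipgrad_const: "lipgrad (\<lambda>x. c) D 0"
  by (rule mk_lipgrad[where G="\<lambda>x. 0"]) auto

lemma lipgrad_scale:
  assumes "lipgrad f D K" "\<bar>a\<bar> \<le> B" "0 \<le> K"
  shows "lipgrad (\<lambda>x. a * f x) D (B * K)"
proof (rule mk_lipgrad[where G="\<lambda>x. a *\<^sub>R grad f x"])
  fix x
  have "((\<lambda>x. a * f x) has_derivative (\<lambda>h. a * (grad f x \<bullet> h))) (at x)"
    using has_derivative_mult_right assms(1) unfolding lipgrad_def by blast
  thus "((\<lambda>x. a * f x) has_derivative (\<lambda>h. (a *\<^sub>R grad f x) \<bullet> h)) (at x)" by simp
next
  fix x y assume "x \<in> D" "y \<in> D"
  hence 1: "norm (grad f x - grad f y) \<le> K * norm (x - y)"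
    using assms unfolding lipgrad_def by auto
  have "norm (a *\<^sub>R grad f x - a *\<^sub>R grad f y) = \<bar>a\<bar> * norm (grad f x - grad f y)"
    by (metis norm_scaleR scaleR_diff_right)
  also have "\<dots> \<le> B * (K * norm (x - y))"
    by (rule mult_mono[OF assms(2) 1]) (use assms in auto)
  finally show "norm (a *\<^sub>R grad f x - a *\<^sub>R grad f y) \<le> B * K * norm (x - y)" by simp
qed

lemma lipgrad_sum:
  assumes "finite I" "\<And>k. k \<in> I \<Longrightarrow> lipgrad (f k) D K" "0 \<le> K"
  shows "lipgrad (\<lambda>x. \<Sum>k\<in>I. f k x) D (real (card I) * K)"
  using assms
proof (induction I rule: finite_induct)
  case empty
  then show ?case using lipgrad_const[of 0 D] by simp
next
  case (insert a F)
  have "lipgrad (\<lambda>x. f a x + (\<Sum>k\<in>F. f k x)) D (K + real (card F) * K)"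
    using lipgrad_add[of "f a" D K] insert by auto
  thus ?case using insert by (simp add: algebra_simps)
qed


lemma has_derivative_vecI:
  fixes f :: "'a::euclidean_space \<Rightarrow> 'b::real_normed_vector^'n"
  assumes "\<And>i. ((\<lambda>x. f x $ i) has_derivative (\<lambda>h. f' h $ i)) F"
  shows "(f has_derivative f') F"
proof -
  have lin: "linear f'"
  proof
    fix x y show "f' (x + y) = f' x + f' y"
      using assms[THEN has_derivative_linear, THEN linear_add] by (simp add: vec_eq_iff)
  next
    fix r x show "f' (r *\<^sub>R x) = r *\<^sub>R f' x"
      using assms[THEN has_derivative_linear, THEN linear_scale] by (simp add: vec_eq_iff)
  qed
  hence bl: "bounded_linear f'" by (simp add: linear_conv_bounded_linear)
  let ?l = "Lim F (\<lambda>x. x)"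
  have "((\<lambda>y. \<chi> i. ((f y $ i - f ?l $ i) - f' (y - ?l) $ i) /\<^sub>R norm (y - ?l)) \<longlongrightarrow> (\<chi> i. 0)) F"
    using assms unfolding has_derivative_def by (intro tendsto_vec_lambda) blast
  moreover have "(\<lambda>y. \<chi> i. ((f y $ i - f ?l $ i) - f' (y - ?l) $ i) /\<^sub>R norm (y - ?l))
     = (\<lambda>y. ((f y - f ?l) - f' (y - ?l)) /\<^sub>R norm (y - ?l))"
    by (simp add: vec_eq_iff fun_eq_iff)
  ultimately show ?thesis unfolding has_derivative_def using bl by (simp add: zero_vec_def)
qed

lemma has_derivative_matI:
  fixes f :: "'a::euclidean_space \<Rightarrow> real^'n^'m"
  assumes "\<And>i j. ((\<lambda>x. f x $ i $ j) has_derivative (\<lambda>h. f' h $ i $ j)) F"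
  shows "(f has_derivative f') F"
  by (intro has_derivative_vecI assms)

lemma deriv_sigm:
  assumes "\<And>z. (\<sigma> has_real_derivative \<sigma>' z) (at z)"
  shows "((sigm \<sigma> :: real^'n^'m \<Rightarrow> _) has_derivative (\<lambda>h. \<chi> i j. \<sigma>' (y$i$j) * h$i$j)) (at y)"
proof (rule has_derivative_matI)
  fix i j
  have lin: "((\<lambda>x::real^'n^'m. x $ i $ j) has_derivative (\<lambda>h. h $ i $ j)) (at y)"
    by (intro bounded_linear_imp_has_derivative bounded_linear_compose[OF bounded_linear_vec_nth bounded_linear_vec_nth])
  have "((\<lambda>x::real^'n^'m. \<sigma> (x $ i $ j)) has_derivative (\<lambda>h. h $ i $ j * \<sigma>' (y$i$j))) (at y)"
    by (rule DERIV_compose_FDERIV[OF assms lin])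
  thus "((\<lambda>x. sigm \<sigma> x $ i $ j) has_derivative (\<lambda>h. (\<chi> i j. \<sigma>' (y $ i $ j) * h $ i $ j) $ i $ j)) (at y)"
    by (simp add: sigm_def mult.commute)
qed

lemma matrix_diff_ldistrib: "(A::real^'n^'m) ** (B - C) = A ** B - A ** C"
  by (simp add: matrix_matrix_mult_def vec_eq_iff sum_subtractf right_diff_distrib)

lemma matrix_diff_rdistrib: "((B::real^'n^'m) - C) ** (A::real^'p^'n) = B ** A - C ** A"
  by (simp add: matrix_matrix_mult_def vec_eq_iff sum_subtractf left_diff_distrib)

lemma bl_lmul: "bounded_linear (\<lambda>H::real^'p^'n. (E::real^'n^'m) ** H)"
proof -
  have "linear (\<lambda>H::real^'p^'n. (E::real^'n^'m) ** H)"
    by (rule linearI) (simp_all add: matrix_add_ldistrib matrix_scalar_ac scalar_matrix_assoc)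
  thus ?thesis by (simp add: linear_conv_bounded_linear)
qed

lemma bl_rmul: "bounded_linear (\<lambda>H::real^'n^'m. H ** (s::real^'p^'n))"
proof -
  have "linear (\<lambda>H::real^'n^'m. H ** (s::real^'p^'n))"
    by (rule linearI) (simp_all add: matrix_matrix_mult_def vec_eq_iff sum.distrib distrib_right sum_distrib_left mult.assoc)
  thus ?thesis by (simp add: linear_conv_bounded_linear)
qed

lemma lip_of_deriv:
  fixes f f' :: "real \<Rightarrow> real"
  assumes "\<And>z. (f has_real_derivative f' z) (at z)" "\<And>z. \<bar>f' z\<bar> \<le> K"
  shows "\<bar>f a - f b\<bar> \<le> K * \<bar>a - b\<bar>"
proof -
  have main: "\<bar>f v - f u\<bar> \<le> K * \<bar>v - u\<bar>" if "u < v" for u v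
  proof -
    have "\<exists>z. u < z \<and> z < v \<and> f v - f u = (v - u) * f' z" by (rule MVT2[OF that]) (rule assms(1))
    then obtain z where "f v - f u = (v - u) * f' z" by blast
    hence "\<bar>f v - f u\<bar> = \<bar>v - u\<bar> * \<bar>f' z\<bar>" by (simp add: abs_mult)
    also have "\<dots> \<le> \<bar>v - u\<bar> * K" by (rule mult_left_mono[OF assms(2)]) simp
    finally show ?thesis by (simp add: mult.commute)
  qed
  show ?thesis
    using main[of a b] main[of b a] by (cases a b rule: linorder_cases) (auto simp: abs_minus_commute)
qed

lemma Tsig:
  fixes \<Phi> :: "real^'N^'J \<Rightarrow> real" and E :: "real^'M^'J" and D :: "real^'N^'J \<Rightarrow> real^'N^'J"
  assumes d1: "\<And>z. (\<sigma> has_real_derivative \<sigma>' z) (at z)"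
    and sl: "\<And>a b. \<bar>\<sigma> a - \<sigma> b\<bar> \<le> M1 * \<bar>a - b\<bar>"
    and s'l: "\<And>a b. \<bar>\<sigma>' a - \<sigma>' b\<bar> \<le> M2 * \<bar>a - b\<bar>"
    and b0: "\<And>z. \<bar>\<sigma> z\<bar> \<le> M0" and b1: "\<And>z. \<bar>\<sigma>' z\<bar> \<le> M1"
    and M: "0 \<le> M0" "0 \<le> M1" "0 \<le> M2"
    and dPhi: "\<And>Z. (\<Phi> has_derivative (\<lambda>h. D Z \<bullet> h)) (at Z)"
    and Dbd: "\<And>Z. norm Z \<le> Bz \<Longrightarrow> norm (D Z) \<le> Bd"
    and Dlip: "\<And>Z Z'. norm Z \<le> Bz \<Longrightarrow> norm Z' \<le> Bz \<Longrightarrow> norm (D Z - D Z') \<le> Kd * norm (Z - Z')"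
    and E: "norm E \<le> R" and Bz: "R * (M0 * norm (\<chi> (i::'M) (j::'N). (1::real))) \<le> Bz"
    and pos: "0 \<le> Bd" "0 \<le> Kd" "0 \<le> R"
  shows "lipgrad (\<lambda>y. \<Phi> (E ** sigm \<sigma> y)) UNIV (M2 * (R * Bd) + M1 * (R * (Kd * (R * M1))))"
proof -
  define U where "U y = transpose E ** D (E ** sigm \<sigma> y)" for y :: "real^'N^'M"
  define G where "G y = (\<chi> i j. \<sigma>' (y$i$j) * U y $i$j)" for y :: "real^'N^'M"
  have Zb: "norm (E ** sigm \<sigma> y) \<le> Bz" for y :: "real^'N^'M"
  proof -
    have "norm (sigm \<sigma> y) \<le> M0 * norm (\<chi> (i::'M) (j::'N). (1::real))"
      by (rule norm_entry_bound) (use M b0 in \<open>auto simp: sigm_def\<close>)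
    hence "norm E * norm (sigm \<sigma> y) \<le> R * (M0 * norm (\<chi> (i::'M) (j::'N). (1::real)))"
      by (rule mult_mono[OF E]) (use pos in auto)
    thus ?thesis using norm_mult_le[of E "sigm \<sigma> y"] Bz by linarith
  qed
  show ?thesis
  proof (rule mk_lipgrad[where G=G])
    fix y :: "real^'N^'M"
    have inner: "((\<lambda>y. E ** sigm \<sigma> y) has_derivative (\<lambda>h. E ** (\<chi> i j. \<sigma>' (y$i$j) * h$i$j))) (at y)"
      using has_derivative_compose[OF deriv_sigm[OF d1] bl_lmul[THEN bounded_linear_imp_has_derivative]] .
    have "((\<lambda>y. \<Phi> (E ** sigm \<sigma> y)) has_derivative (\<lambda>h. D (E ** sigm \<sigma> y) \<bullet> (E ** (\<chi> i j. \<sigma>' (y$i$j) * h$i$j)))) (at y)"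
      using has_derivative_compose[OF inner dPhi] .
    moreover have "D (E ** sigm \<sigma> y) \<bullet> (E ** (\<chi> i j. \<sigma>' (y$i$j) * h$i$j)) = G y \<bullet> h" for h
      unfolding adj1 had_inner G_def U_def ..
    ultimately show "((\<lambda>y. \<Phi> (E ** sigm \<sigma> y)) has_derivative (\<lambda>h. G y \<bullet> h)) (at y)" by simp
  next
    fix x y :: "real^'N^'M"
    have split: "G x - G y = (\<chi> i j. (\<sigma>' (x$i$j) - \<sigma>' (y$i$j)) * U x $i$j) + (\<chi> i j. \<sigma>' (y$i$j) * (U x - U y) $i$j)"
      by (simp add: G_def vec_eq_iff algebra_simps)
    have Ux: "norm (U x) \<le> R * Bd"
    proof -
      have "norm (U x) \<le> norm (transpose E) * norm (D (E ** sigm \<sigma> x))"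
        unfolding U_def by (rule norm_mult_le)
      also have "\<dots> = norm E * norm (D (E ** sigm \<sigma> x))" by (simp only: norm_transpose)
      also have "\<dots> \<le> R * Bd" by (rule mult_mono[OF E Dbd[OF Zb[of x]]]) (use pos in simp_all)
      finally show ?thesis .
    qed
    have n1: "norm (\<chi> i j. (\<sigma>' (x$i$j) - \<sigma>' (y$i$j)) * U x $i$j) \<le> (M2 * (R * Bd)) * norm (x - y)"
    proof (rule norm_entry_cmp2)
      fix i j
      have "\<bar>(\<sigma>' (x$i$j) - \<sigma>' (y$i$j)) * U x $i$j\<bar> = \<bar>\<sigma>' (x$i$j) - \<sigma>' (y$i$j)\<bar> * \<bar>U x $i$j\<bar>" by (simp add: abs_mult)
      also have "\<dots> \<le> (M2 * \<bar>(x - y)$i$j\<bar>) * (R * Bd)"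
      proof (rule mult_mono)
        show "\<bar>\<sigma>' (x$i$j) - \<sigma>' (y$i$j)\<bar> \<le> M2 * \<bar>(x - y)$i$j\<bar>" using s'l[of "x$i$j" "y$i$j"] by simp
        show "\<bar>U x $i$j\<bar> \<le> R * Bd" using entry_le_norm[of "U x" i j] Ux by linarith
        show "0 \<le> M2 * \<bar>(x - y)$i$j\<bar>" using M by simp
      qed simp
      finally show "\<bar>(\<chi> i j. (\<sigma>' (x$i$j) - \<sigma>' (y$i$j)) * U x $i$j) $i$j\<bar> \<le> M2 * (R * Bd) * \<bar>(x - y)$i$j\<bar>"
        by (simp add: mult_ac)
    qed (use M pos in simp)
    have sd: "norm (sigm \<sigma> x - sigm \<sigma> y) \<le> M1 * norm (x - y)"
    proof (rule norm_entry_cmp2)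
      fix i j show "\<bar>(sigm \<sigma> x - sigm \<sigma> y)$i$j\<bar> \<le> M1 * \<bar>(x - y)$i$j\<bar>"
        using sl[of "x$i$j" "y$i$j"] by (simp add: sigm_def)
    qed (use M in simp)
    have Ud: "norm (U x - U y) \<le> R * (Kd * (R * M1)) * norm (x - y)"
    proof -
      have "U x - U y = transpose E ** (D (E ** sigm \<sigma> x) - D (E ** sigm \<sigma> y))"
        by (simp add: U_def matrix_diff_ldistrib)
      hence "norm (U x - U y) \<le> norm (transpose E) * norm (D (E ** sigm \<sigma> x) - D (E ** sigm \<sigma> y))"
        by (simp only: norm_mult_le)
      also have "\<dots> \<le> R * norm (D (E ** sigm \<sigma> x) - D (E ** sigm \<sigma> y))"
        unfolding norm_transpose by (rule mult_right_mono[OF E]) simp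
      also have "\<dots> \<le> R * (Kd * norm (E ** sigm \<sigma> x - E ** sigm \<sigma> y))"
        by (rule mult_left_mono[OF Dlip[OF Zb Zb]]) (use pos in simp)
      also have "norm (E ** sigm \<sigma> x - E ** sigm \<sigma> y) \<le> R * (M1 * norm (x - y))"
      proof -
        have "norm (E ** sigm \<sigma> x - E ** sigm \<sigma> y) \<le> norm E * norm (sigm \<sigma> x - sigm \<sigma> y)"
          unfolding matrix_diff_ldistrib[symmetric] by (rule norm_mult_le)
        also have "\<dots> \<le> R * (M1 * norm (x - y))" by (rule mult_mono[OF E sd]) (use pos in simp_all)
        finally show ?thesis .
      qed
      hence "R * (Kd * norm (E ** sigm \<sigma> x - E ** sigm \<sigma> y)) \<le> R * (Kd * (R * (M1 * norm (x - y))))"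
        using pos by (simp add: mult_left_mono)
      finally show ?thesis by (simp add: mult_ac)
    qed
    have n2: "norm (\<chi> i j. \<sigma>' (y$i$j) * (U x - U y) $i$j) \<le> M1 * norm (U x - U y)"
    proof (rule norm_entry_cmp2)
      fix i j show "\<bar>(\<chi> i j. \<sigma>' (y$i$j) * (U x - U y) $i$j)$i$j\<bar> \<le> M1 * \<bar>(U x - U y)$i$j\<bar>"
        using mult_right_mono[OF b1[of "y$i$j"], of "\<bar>(U x - U y)$i$j\<bar>"] by (simp add: abs_mult)
    qed (use M in simp)
    have "norm (G x - G y) \<le> (M2 * (R * Bd)) * norm (x - y) + M1 * (R * (Kd * (R * M1)) * norm (x - y))"
    proof -
      have "M1 * norm (U x - U y) \<le> M1 * (R * (Kd * (R * M1)) * norm (x - y))"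
        by (rule mult_left_mono[OF Ud M(2)])
      thus ?thesis unfolding split using norm_triangle_ineq[of "\<chi> i j. (\<sigma>' (x$i$j) - \<sigma>' (y$i$j)) * U x $i$j"
        "\<chi> i j. \<sigma>' (y$i$j) * (U x - U y) $i$j"] n1 n2 by linarith
    qed
    thus "norm (G x - G y) \<le> (M2 * (R * Bd) + M1 * (R * (Kd * (R * M1)))) * norm (x - y)"
      by (simp add: algebra_simps)
  qed
qed

definition Ssum :: "real^'N^'J \<Rightarrow> 'N \<Rightarrow> real" where
  "Ssum Z n = (\<Sum>k\<in>UNIV. exp (Z$k$n))"
definition ceC :: "real^'N^'J \<Rightarrow> real^'N^'J \<Rightarrow> 'N \<Rightarrow> real" where
  "ceC A Z n = ln (Ssum Z n) - (\<Sum>j\<in>UNIV. A$j$n * Z$j$n)"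
definition DL :: "real^'N^'J \<Rightarrow> real^'N^'J \<Rightarrow> real^'N^'J" where
  "DL A Z = (\<chi> j n. 2 * ceC A Z n * (exp (Z$j$n) / Ssum Z n - A$j$n))"

lemma Ssum_pos: "0 < Ssum Z n"
  unfolding Ssum_def by (rule sum_pos) auto

lemma onehot_nonneg: "onehot_cols A \<Longrightarrow> 0 \<le> A$j$n"
  unfolding onehot_cols_def by (metis order_refl zero_le_one)

lemma onehot_le1: "onehot_cols A \<Longrightarrow> A$j$n \<le> 1"
  unfolding onehot_cols_def by (metis order_refl zero_le_one)

lemma onehot_sum: "onehot_cols A \<Longrightarrow> (\<Sum>j\<in>UNIV. A$j$n) = 1"
  unfolding onehot_cols_def by blast

lemma ce_eq:
  assumes "onehot_cols A"
  shows "ce (column n Z) (column n A) = ceC A Z n"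
proof -
  have "ce (column n Z) (column n A) = - (\<Sum>j\<in>UNIV. A$j$n * (Z$j$n - ln (Ssum Z n)))"
    unfolding ce_def column_def Ssum_def
    using Ssum_pos[of Z n] by (simp add: ln_div Ssum_def)
  also have "\<dots> = (\<Sum>j\<in>UNIV. A$j$n) * ln (Ssum Z n) - (\<Sum>j\<in>UNIV. A$j$n * Z$j$n)"
    by (simp add: right_diff_distrib sum_subtractf sum_distrib_right)
  finally show ?thesis using onehot_sum[OF assms] by (simp add: ceC_def)
qed

lemma Lvec_eq:
  assumes "onehot_cols A"
  shows "(norm (Lvec Z A))^2 = (\<Sum>n\<in>UNIV. (ceC A Z n)^2)"
  unfolding norm_sq_vec Lvec_def using ce_eq[OF assms] by simp

lemma has_derivative_entry[derivative_intros]: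
  "((\<lambda>Z::real^'n^'m. Z$k$n) has_derivative (\<lambda>h. h$k$n)) F"
  by (intro bounded_linear_imp_has_derivative bounded_linear_compose[OF bounded_linear_vec_nth bounded_linear_vec_nth])

lemma deriv_ceC:
  "((\<lambda>Z. ceC A Z n) has_derivative
     (\<lambda>h. (\<Sum>k\<in>UNIV. h$k$n * exp (Z$k$n)) * inverse (Ssum Z n) - (\<Sum>j\<in>UNIV. A$j$n * h$j$n))) (at Z)"
proof -
  have e: "((\<lambda>Z. exp (Z$k$n)) has_derivative (\<lambda>h. h$k$n * exp (Z$k$n))) (at Z)" for k
    by (rule DERIV_compose_FDERIV[OF DERIV_exp has_derivative_entry])
  have S: "((\<lambda>Z. Ssum Z n) has_derivative (\<lambda>h. \<Sum>k\<in>UNIV. h$k$n * exp (Z$k$n))) (at Z)"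
    unfolding Ssum_def by (rule has_derivative_sum) (rule e)
  have l: "((\<lambda>Z. ln (Ssum Z n)) has_derivative (\<lambda>h. (\<Sum>k\<in>UNIV. h$k$n * exp (Z$k$n)) * inverse (Ssum Z n))) (at Z)"
    by (rule DERIV_compose_FDERIV[OF DERIV_ln[OF Ssum_pos] S])
  have lin: "((\<lambda>Z. \<Sum>j\<in>UNIV. A$j$n * Z$j$n) has_derivative (\<lambda>h. \<Sum>j\<in>UNIV. A$j$n * h$j$n)) (at Z)"
    by (rule has_derivative_sum) (rule has_derivative_mult_right[OF has_derivative_entry])
  show ?thesis unfolding ceC_def by (rule has_derivative_diff[OF l lin])
qed

lemma deriv_Loss:
  assumes "onehot_cols A"
  shows "((\<lambda>Z. (norm (Lvec Z A))^2) has_derivative (\<lambda>h. DL A Z \<bullet> h)) (at Z)"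
proof -
  have sq: "((\<lambda>Z. (ceC A Z n)^2) has_derivative
     (\<lambda>h. 2 * ceC A Z n * ((\<Sum>k\<in>UNIV. h$k$n * exp (Z$k$n)) * inverse (Ssum Z n) - (\<Sum>j\<in>UNIV. A$j$n * h$j$n)))) (at Z)" for n
    using has_derivative_power[OF deriv_ceC[of A n Z], of 2]
    by (rule has_derivative_eq_rhs) (simp add: fun_eq_iff algebra_simps)
  have "((\<lambda>Z. \<Sum>n\<in>UNIV. (ceC A Z n)^2) has_derivative
     (\<lambda>h. \<Sum>n\<in>UNIV. 2 * ceC A Z n * ((\<Sum>k\<in>UNIV. h$k$n * exp (Z$k$n)) * inverse (Ssum Z n) - (\<Sum>j\<in>UNIV. A$j$n * h$j$n)))) (at Z)"
    by (rule has_derivative_sum) (rule sq)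
  moreover have "(\<Sum>n\<in>UNIV. 2 * ceC A Z n * ((\<Sum>k\<in>UNIV. h$k$n * exp (Z$k$n)) * inverse (Ssum Z n) - (\<Sum>j\<in>UNIV. A$j$n * h$j$n)))
     = DL A Z \<bullet> h" for h
  proof -
    have "(\<Sum>n\<in>UNIV. 2 * ceC A Z n * ((\<Sum>k\<in>UNIV. h$k$n * exp (Z$k$n)) * inverse (Ssum Z n) - (\<Sum>j\<in>UNIV. A$j$n * h$j$n)))
      = (\<Sum>n\<in>UNIV. \<Sum>j\<in>UNIV. 2 * ceC A Z n * (exp (Z$j$n) / Ssum Z n - A$j$n) * h$j$n)"
      by (simp add: sum_distrib_left sum_distrib_right sum_subtractf right_diff_distrib left_diff_distrib divide_inverse mult_ac)
    also have "\<dots> = DL A Z \<bullet> h"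
      unfolding inner_mat DL_def by (simp, rule sum.swap)
    finally show ?thesis .
  qed
  ultimately show ?thesis using Lvec_eq[OF assms] by simp
qed

lemma Ssum_shift:
  assumes "\<And>k. Z'$k$n \<le> Z$k$n + d"
  shows "Ssum Z' n \<le> exp d * Ssum Z n"
  unfolding Ssum_def sum_distrib_left
  by (rule sum_mono) (use assms in \<open>simp add: exp_add[symmetric] add.commute\<close>)

lemma ln_Ssum_lip:
  fixes Z Z' :: "real^'N^'J"
  shows "\<bar>ln (Ssum Z n) - ln (Ssum Z' n)\<bar> \<le> norm (Z - Z')"
proof -
  let ?d = "norm (Z - Z')"
  have e0: "\<bar>Z$k$n - Z'$k$n\<bar> \<le> ?d" for k using entry_le_norm[of "Z - Z'" k n] by simp
  have e: "Z$k$n \<le> Z'$k$n + ?d" "Z'$k$n \<le> Z$k$n + ?d" for k using e0[of k] by (simp_all add: abs_le_iff)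
  have "Ssum Z' n \<le> exp ?d * Ssum Z n" by (rule Ssum_shift, rule e)
  hence "ln (Ssum Z' n) \<le> ln (exp ?d * Ssum Z n)"
    using Ssum_pos[of Z' n] Ssum_pos[of Z n] by (subst ln_le_cancel_iff) auto
  hence 1: "ln (Ssum Z' n) \<le> ?d + ln (Ssum Z n)" using Ssum_pos[of Z n] by (simp add: ln_mult)
  have "Ssum Z n \<le> exp ?d * Ssum Z' n" by (rule Ssum_shift, rule e)
  hence "ln (Ssum Z n) \<le> ln (exp ?d * Ssum Z' n)"
    using Ssum_pos[of Z' n] Ssum_pos[of Z n] by (subst ln_le_cancel_iff) auto
  hence 2: "ln (Ssum Z n) \<le> ?d + ln (Ssum Z' n)" using Ssum_pos[of Z' n] by (simp add: ln_mult)
  show ?thesis using 1 2 by linarith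
qed

lemma lin_lip:
  assumes "onehot_cols A"
  shows "\<bar>(\<Sum>j\<in>UNIV. A$j$n * Z$j$n) - (\<Sum>j\<in>UNIV. A$j$n * Z'$j$n)\<bar> \<le> norm (Z - Z')"
proof -
  have "\<bar>(\<Sum>j\<in>UNIV. A$j$n * Z$j$n) - (\<Sum>j\<in>UNIV. A$j$n * Z'$j$n)\<bar> = \<bar>\<Sum>j\<in>UNIV. A$j$n * (Z - Z')$j$n\<bar>"
    by (simp add: sum_subtractf right_diff_distrib)
  also have "\<dots> \<le> (\<Sum>j\<in>UNIV. \<bar>A$j$n * (Z - Z')$j$n\<bar>)" by (rule sum_abs)
  also have "\<dots> \<le> (\<Sum>j\<in>UNIV. A$j$n * norm (Z - Z'))"
  proof (rule sum_mono)
    fix j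
    have "\<bar>(Z - Z')$j$n\<bar> \<le> norm (Z - Z')" by (rule entry_le_norm)
    hence "A$j$n * \<bar>(Z - Z')$j$n\<bar> \<le> A$j$n * norm (Z - Z')"
      by (rule mult_left_mono) (rule onehot_nonneg[OF assms])
    thus "\<bar>A$j$n * (Z - Z')$j$n\<bar> \<le> A$j$n * norm (Z - Z')"
      by (simp add: abs_mult onehot_nonneg[OF assms])
  qed
  also have "\<dots> = norm (Z - Z')" by (simp add: sum_distrib_right[symmetric] onehot_sum[OF assms])
  finally show ?thesis .
qed

lemma ceC_lip:
  assumes "onehot_cols A"
  shows "\<bar>ceC A Z n - ceC A Z' n\<bar> \<le> 2 * norm (Z - Z')"
  using ln_Ssum_lip[of Z n Z'] lin_lip[OF assms, of n Z Z'] unfolding ceC_def by linarith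

lemma lin_bound:
  assumes "onehot_cols A" "norm Z \<le> B"
  shows "\<bar>\<Sum>j\<in>UNIV. A$j$n * Z$j$n\<bar> \<le> B"
  using lin_lip[OF assms(1), of n Z 0] assms(2) by simp

lemma ln_Ssum_bound:
  fixes Z :: "real^'N^'J"
  assumes "norm Z \<le> B"
  shows "\<bar>ln (Ssum Z n)\<bar> \<le> B + ln (real CARD('J))"
proof -
  have eb: "\<bar>Z$k$n\<bar> \<le> B" for k using entry_le_norm[of Z k n] assms by linarith
  obtain k0 :: 'J where True by blast
  have "exp (Z$k0$n) \<le> Ssum Z n" unfolding Ssum_def
    by (rule member_le_sum) auto
  hence "ln (exp (Z$k0$n)) \<le> ln (Ssum Z n)" using Ssum_pos[of Z n] by (subst ln_le_cancel_iff) auto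
  hence "Z$k0$n \<le> ln (Ssum Z n)" by simp
  hence lo: "-B \<le> ln (Ssum Z n)" using eb[of k0] by linarith
  have "Ssum Z n \<le> (\<Sum>k\<in>(UNIV::'J set). exp B)" unfolding Ssum_def
    by (rule sum_mono) (use eb in \<open>auto simp: abs_le_iff\<close>)
  hence "Ssum Z n \<le> real CARD('J) * exp B" by simp
  hence "ln (Ssum Z n) \<le> ln (real CARD('J) * exp B)" using Ssum_pos[of Z n] by simp
  also have "\<dots> = ln (real CARD('J)) + B" by (simp add: ln_mult)
  finally have hi: "ln (Ssum Z n) \<le> ln (real CARD('J)) + B" .
  have "0 \<le> ln (real CARD('J))" by simp
  thus ?thesis using lo hi by linarith
qed

lemma ceC_bound:
  fixes Z :: "real^'N^'J"
  assumes "onehot_cols A" "norm Z \<le> B"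
  shows "\<bar>ceC A Z n\<bar> \<le> 2 * B + ln (real CARD('J))"
  using ln_Ssum_bound[OF assms(2), of n] lin_bound[OF assms, of n] unfolding ceC_def by linarith

lemma exp_minus_one_le: "0 \<le> (x::real) \<Longrightarrow> exp x - 1 \<le> x * exp x"
proof -
  have "1 + (-x) \<le> exp (-x)" by (rule exp_ge_add_one_self)
  hence "exp x * (1 - x) \<le> exp x * exp (-x)" by (simp add: mult_left_mono)
  thus ?thesis by (simp add: exp_minus algebra_simps)
qed

lemma sm_bounds: "0 \<le> exp (Z$j$n) / Ssum Z n \<and> exp (Z$j$n) / Ssum Z n \<le> 1"
proof -
  have "exp (Z$j$n) \<le> Ssum Z n" unfolding Ssum_def by (rule member_le_sum) auto
  thus ?thesis using Ssum_pos[of Z n] by simp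
qed

lemma sm_rel:
  fixes Z Z' :: "real^'N^'J"
  shows "exp (Z'$j$n) / Ssum Z' n \<le> exp (2 * norm (Z - Z')) * (exp (Z$j$n) / Ssum Z n)"
proof -
  let ?d = "norm (Z - Z')"
  have e0: "\<bar>Z$k$n - Z'$k$n\<bar> \<le> ?d" for k using entry_le_norm[of "Z - Z'" k n] by simp
  have e: "Z$k$n \<le> Z'$k$n + ?d" "Z'$k$n \<le> Z$k$n + ?d" for k using e0[of k] by (simp_all add: abs_le_iff)
  have S: "Ssum Z n \<le> exp ?d * Ssum Z' n" by (rule Ssum_shift, rule e)
  have n: "exp (Z'$j$n) \<le> exp ?d * exp (Z$j$n)" using e[of j] by (simp add: exp_add[symmetric] abs_le_iff)
  have pZ: "0 < Ssum Z n" "0 < Ssum Z' n" using Ssum_pos by auto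
  have "exp (Z'$j$n) * Ssum Z n \<le> (exp ?d * exp (Z$j$n)) * (exp ?d * Ssum Z' n)"
    by (rule mult_mono[OF n S]) (use pZ in auto)
  also have "(exp ?d * exp (Z$j$n)) * (exp ?d * Ssum Z' n) = (exp ?d * exp ?d) * (exp (Z$j$n) * Ssum Z' n)"
    by (simp only: mult_ac)
  also have "exp ?d * exp ?d = exp (2 * ?d)" by (simp only: mult_2 exp_add)
  finally have key: "exp (Z'$j$n) * Ssum Z n \<le> exp (2 * ?d) * (exp (Z$j$n) * Ssum Z' n)" .
  have "exp (Z'$j$n) / Ssum Z' n = (exp (Z'$j$n) * Ssum Z n) / (Ssum Z n * Ssum Z' n)"
    using pZ by simp
  also have "\<dots> \<le> (exp (2 * ?d) * (exp (Z$j$n) * Ssum Z' n)) / (Ssum Z n * Ssum Z' n)"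
    by (rule divide_right_mono[OF key]) (use pZ in simp)
  also have "\<dots> = exp (2 * ?d) * (exp (Z$j$n) / Ssum Z n)"
    using pZ by simp
  finally show ?thesis .
qed

lemma close_lip:
  fixes a b e :: real
  assumes "b \<le> e * a" "a \<le> e * b" "0 \<le> a" "a \<le> 1" "0 \<le> b" "b \<le> 1" "1 \<le> e"
  shows "\<bar>a - b\<bar> \<le> e - 1"
proof -
  have "(e - 1) * a \<le> (e - 1) * 1" by (rule mult_left_mono) (use assms in auto)
  moreover have "(e - 1) * b \<le> (e - 1) * 1" by (rule mult_left_mono) (use assms in auto)
  moreover have "(e - 1) * a = e * a - a" "(e - 1) * b = e * b - b" by (simp_all add: left_diff_distrib)
  ultimately have 1: "a - b \<le> e - 1" and 2: "b - a \<le> e - 1" using assms(1,2) by auto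
  from 1 2 show ?thesis by (simp add: abs_le_iff)
qed

lemma sm_lip:
  fixes Z Z' :: "real^'N^'J"
  shows "\<bar>exp (Z$j$n) / Ssum Z n - exp (Z'$j$n) / Ssum Z' n\<bar> \<le> 2 * norm (Z - Z') * exp (2 * norm (Z - Z'))"
proof -
  have ab: "exp (Z'$j$n) / Ssum Z' n \<le> exp (2 * norm (Z - Z')) * (exp (Z$j$n) / Ssum Z n)" by (rule sm_rel)
  have ba: "exp (Z$j$n) / Ssum Z n \<le> exp (2 * norm (Z - Z')) * (exp (Z'$j$n) / Ssum Z' n)"
    using sm_rel[of Z j n Z'] by (simp only: norm_minus_commute)
  have "\<bar>exp (Z$j$n) / Ssum Z n - exp (Z'$j$n) / Ssum Z' n\<bar> \<le> exp (2 * norm (Z - Z')) - 1"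
    by (rule close_lip[OF ab ba]) (use sm_bounds in auto)
  also have "\<dots> \<le> 2 * norm (Z - Z') * exp (2 * norm (Z - Z'))" by (rule exp_minus_one_le) simp
  finally show ?thesis .
qed

lemma sm_minus_A:
  assumes "onehot_cols A"
  shows "\<bar>exp (Z$j$n) / Ssum Z n - A$j$n\<bar> \<le> 1"
  using sm_bounds[of Z j n] onehot_nonneg[OF assms, of j n] onehot_le1[OF assms, of j n] by (simp add: abs_le_iff)

lemma DL_bound:
  fixes Z :: "real^'N^'J"
  assumes A: "onehot_cols A" and Z: "norm Z \<le> B"
  shows "norm (DL A Z) \<le> (2 * (2 * B + ln (real CARD('J)))) * norm (\<chi> (i::'J) (j::'N). (1::real))"
proof (rule norm_entry_bound)
  show "0 \<le> 2 * (2 * B + ln (real CARD('J)))"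
    using order_trans[OF abs_ge_zero ceC_bound[OF A Z, of undefined]] by simp
next
  fix j n
  have "\<bar>DL A Z $ j $ n\<bar> = 2 * \<bar>ceC A Z n\<bar> * \<bar>exp (Z$j$n) / Ssum Z n - A$j$n\<bar>"
    by (simp add: DL_def abs_mult)
  also have "\<dots> \<le> 2 * (2 * B + ln (real CARD('J))) * 1"
    by (intro mult_mono mult_left_mono ceC_bound[OF A Z] sm_minus_A[OF A])
      (use order_trans[OF abs_ge_zero ceC_bound[OF A Z, of undefined]] in auto)
  finally show "\<bar>DL A Z $ j $ n\<bar> \<le> 2 * (2 * B + ln (real CARD('J)))" by simp
qed

lemma DL_lip:
  fixes Z Z' :: "real^'N^'J"
  assumes A: "onehot_cols A" and Z: "norm Z \<le> B" and Z': "norm Z' \<le> B"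
  shows "norm (DL A Z - DL A Z') \<le> (4 * (1 + (2 * B + ln (real CARD('J))) * exp (4 * B)) * norm (\<chi> (i::'J) (j::'N). (1::real))) * norm (Z - Z')"
proof -
  let ?d = "norm (Z - Z')" and ?Bc = "2 * B + ln (real CARD('J))"
  have Bc: "0 \<le> ?Bc" using order_trans[OF abs_ge_zero ceC_bound[OF A Z, of undefined]] by simp
  have d2: "?d \<le> 2 * B" using norm_triangle_ineq4[of Z Z'] Z Z' by linarith
  have "norm (DL A Z - DL A Z') \<le> (4 * ?d * (1 + ?Bc * exp (4 * B))) * norm (\<chi> (i::'J) (j::'N). (1::real))"
  proof (rule norm_entry_bound)
    show "0 \<le> 4 * ?d * (1 + ?Bc * exp (4 * B))" using Bc by simp
  next
    fix j n
    let ?s = "exp (Z$j$n) / Ssum Z n" and ?s' = "exp (Z'$j$n) / Ssum Z' n"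
    have eq: "(DL A Z - DL A Z') $ j $ n = 2 * (ceC A Z n - ceC A Z' n) * (?s - A$j$n) + 2 * ceC A Z' n * (?s - ?s')"
      by (simp add: DL_def algebra_simps)
    have t1: "\<bar>2 * (ceC A Z n - ceC A Z' n) * (?s - A$j$n)\<bar> \<le> 2 * (2 * ?d) * 1"
      unfolding abs_mult by (intro mult_mono mult_left_mono ceC_lip[OF A] sm_minus_A[OF A]) auto
    have "exp (2 * ?d) \<le> exp (4 * B)" using d2 by simp
    hence "2 * ?d * exp (2 * ?d) \<le> 2 * ?d * exp (4 * B)" by (intro mult_left_mono) auto
    hence sl: "\<bar>?s - ?s'\<bar> \<le> 2 * ?d * exp (4 * B)" using sm_lip[of Z j n Z'] by linarith
    have t2: "\<bar>2 * ceC A Z' n * (?s - ?s')\<bar> \<le> 2 * ?Bc * (2 * ?d * exp (4 * B))"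
      unfolding abs_mult by (intro mult_mono mult_left_mono ceC_bound[OF A Z'] sl) (use Bc in auto)
    have "\<bar>(DL A Z - DL A Z') $ j $ n\<bar> \<le> 2 * (2 * ?d) * 1 + 2 * ?Bc * (2 * ?d * exp (4 * B))"
      unfolding eq using t1 t2 abs_triangle_ineq by (smt (verit))
    also have "\<dots> = 4 * ?d * (1 + ?Bc * exp (4 * B))" by (simp add: algebra_simps)
    finally show "\<bar>(DL A Z - DL A Z') $ j $ n\<bar> \<le> 4 * ?d * (1 + ?Bc * exp (4 * B))" .
  qed
  thus ?thesis by (simp only: mult_ac)
qed

definition sigok :: "(real \<Rightarrow> real) \<Rightarrow> (real \<Rightarrow> real) \<Rightarrow> real \<Rightarrow> real \<Rightarrow> real \<Rightarrow> bool" where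
  "sigok \<sigma> \<sigma>' M0 M1 M2 \<longleftrightarrow> (\<forall>z. (\<sigma> has_real_derivative \<sigma>' z) (at z)) \<and>
    (\<forall>a b. \<bar>\<sigma> a - \<sigma> b\<bar> \<le> M1 * \<bar>a - b\<bar>) \<and> (\<forall>a b. \<bar>\<sigma>' a - \<sigma>' b\<bar> \<le> M2 * \<bar>a - b\<bar>) \<and>
    (\<forall>z. \<bar>\<sigma> z\<bar> \<le> M0) \<and> (\<forall>z. \<bar>\<sigma>' z\<bar> \<le> M1) \<and> 0 \<le> M0 \<and> 0 \<le> M1 \<and> 0 \<le> M2"

lemma deriv_normsq_plus:
  "((\<lambda>x::'a::real_inner. (norm (x + Q))^2) has_derivative (\<lambda>h. (2 *\<^sub>R (x + Q)) \<bullet> h)) (at x)"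
proof -
  have "((\<lambda>x. (x + Q) \<bullet> (x + Q)) has_derivative (\<lambda>h. (x + Q) \<bullet> h + h \<bullet> (x + Q))) (at x)"
    by (auto intro!: derivative_eq_intros)
  thus ?thesis by (simp add: power2_norm_eq_inner inner_commute algebra_simps)
qed

lemma deriv_normsq_minus:
  "((\<lambda>x::'a::real_inner. (norm (P - x))^2) has_derivative (\<lambda>h. (2 *\<^sub>R (x - P)) \<bullet> h)) (at x)"
proof -
  have "((\<lambda>x. (P - x) \<bullet> (P - x)) has_derivative (\<lambda>h. (P - x) \<bullet> (- h) + (- h) \<bullet> (P - x))) (at x)"
    by (auto intro!: derivative_eq_intros)
  thus ?thesis by (simp add: power2_norm_eq_inner inner_commute algebra_simps)
qed

lemma T1: "lipgrad (\<lambda>x::'a::euclidean_space. (norm (P - x))^2) D 2"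
proof (rule mk_lipgrad[where G="\<lambda>x. 2 *\<^sub>R (x - P)"])
  show "\<And>x. ((\<lambda>x. (norm (P - x))^2) has_derivative (\<lambda>h. (2 *\<^sub>R (x - P)) \<bullet> h)) (at x)"
    by (rule deriv_normsq_minus)
  fix x y :: 'a
  have "2 *\<^sub>R (x - P) - 2 *\<^sub>R (y - P) = 2 *\<^sub>R (x - y)" by (simp add: algebra_simps)
  thus "norm (2 *\<^sub>R (x - P) - 2 *\<^sub>R (y - P)) \<le> 2 * norm (x - y)" by simp
qed

lemma T5:
  assumes "\<bar>\<kappa>\<bar> \<le> K"
  shows "lipgrad (\<lambda>x::'a::euclidean_space. (norm x)^2 * \<kappa>) D (2 * K)"
proof (rule mk_lipgrad[where G="\<lambda>x. (2 * \<kappa>) *\<^sub>R x"])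
  fix x :: 'a
  have "((\<lambda>x. (norm (x + 0))^2) has_derivative (\<lambda>h. (2 *\<^sub>R (x + 0)) \<bullet> h)) (at x)"
    by (rule deriv_normsq_plus)
  hence "((\<lambda>x. (norm x)^2 * \<kappa>) has_derivative (\<lambda>h. ((2 *\<^sub>R x) \<bullet> h) * \<kappa>)) (at x)"
    by (intro has_derivative_mult_left) simp
  thus "((\<lambda>x. (norm x)^2 * \<kappa>) has_derivative (\<lambda>h. ((2 * \<kappa>) *\<^sub>R x) \<bullet> h)) (at x)"
    by (simp add: mult_ac)
next
  fix x y :: 'a
  have "norm ((2 * \<kappa>) *\<^sub>R x - (2 * \<kappa>) *\<^sub>R y) = 2 * \<bar>\<kappa>\<bar> * norm (x - y)"
    by (metis abs_mult abs_numeral norm_scaleR scaleR_diff_right)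
  also have "\<dots> \<le> 2 * K * norm (x - y)" using assms by (simp add: mult_right_mono)
  finally show "norm ((2 * \<kappa>) *\<^sub>R x - (2 * \<kappa>) *\<^sub>R y) \<le> 2 * K * norm (x - y)" .
qed

lemma sigokD:
  assumes "sigok \<sigma> \<sigma>' M0 M1 M2"
  shows "\<And>z. (\<sigma> has_real_derivative \<sigma>' z) (at z)" "\<And>a b. \<bar>\<sigma> a - \<sigma> b\<bar> \<le> M1 * \<bar>a - b\<bar>"
    "\<And>a b. \<bar>\<sigma>' a - \<sigma>' b\<bar> \<le> M2 * \<bar>a - b\<bar>" "\<And>z. \<bar>\<sigma> z\<bar> \<le> M0" "\<And>z. \<bar>\<sigma>' z\<bar> \<le> M1"
    "0 \<le> M0" "0 \<le> M1" "0 \<le> M2"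
  using assms unfolding sigok_def by auto

lemma T2:
  fixes E :: "real^'M^'J" and P Q :: "real^'N^'J"
  assumes s: "sigok \<sigma> \<sigma>' M0 M1 M2"
    and E: "norm E \<le> R" and P: "norm P \<le> Bp" and Q: "norm Q \<le> Bq" and R: "0 \<le> R"
  shows "lipgrad (\<lambda>y. (norm (E ** sigm \<sigma> y + P - Q))^2) UNIV
     (M2 * (R * (2 * (R * (M0 * norm (\<chi> (i::'M) (j::'N). (1::real))) + Bp + Bq))) + M1 * (R * (2 * (R * M1))))"
proof -
  let ?Bz = "R * (M0 * norm (\<chi> (i::'M) (j::'N). (1::real)))"
  note sf = sigokD[OF s]
  have dP: "((\<lambda>Z. (norm (Z + P - Q))^2) has_derivative (\<lambda>h. (2 *\<^sub>R (Z + P - Q)) \<bullet> h)) (at Z)" for Z :: "real^'N^'J"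
    using deriv_normsq_plus[of "P - Q" Z] by (simp add: algebra_simps)
  have Db: "norm (2 *\<^sub>R (Z + P - Q)) \<le> 2 * (?Bz + Bp + Bq)" if "norm Z \<le> ?Bz" for Z :: "real^'N^'J"
  proof -
    have "norm (Z + P - Q) \<le> norm (Z + P) + norm Q" by (rule norm_triangle_ineq4)
    moreover have "norm (Z + P) \<le> norm Z + norm P" by (rule norm_triangle_ineq)
    ultimately show ?thesis using P Q that by simp
  qed
  have Dl: "norm (2 *\<^sub>R (Z + P - Q) - 2 *\<^sub>R (Z' + P - Q)) \<le> 2 * norm (Z - Z')" 
    if "norm Z \<le> ?Bz" "norm Z' \<le> ?Bz" for Z Z' :: "real^'N^'J"
  proof -
    have "2 *\<^sub>R (Z + P - Q) - 2 *\<^sub>R (Z' + P - Q) = 2 *\<^sub>R (Z - Z')" by (simp add: algebra_simps)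
    thus ?thesis by simp
  qed
  have Bz0: "0 \<le> ?Bz" using sf(6) R by simp
  have "0 \<le> ?Bz + Bp + Bq" using Bz0 P Q norm_ge_zero[of P] norm_ge_zero[of Q] by linarith
  hence p: "0 \<le> 2 * (?Bz + Bp + Bq)" by simp
  show ?thesis
  proof -
    have two: "0 \<le> (2::real)" by simp
    show ?thesis by (rule Tsig[OF sf(1-8) dP Db Dl E order_refl p two R])
  qed
qed

lemma T3:
  fixes E :: "real^'M^'J" and A :: "real^'N^'J"
  assumes s: "sigok \<sigma> \<sigma>' M0 M1 M2" and A: "onehot_cols A"
    and E: "norm E \<le> R" and R: "0 \<le> R"
  defines "Bz \<equiv> R * (M0 * norm (\<chi> (i::'M) (j::'N). (1::real)))"
  shows "lipgrad (\<lambda>y. (norm (Lvec (E ** sigm \<sigma> y) A))^2) UNIV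
     (M2 * (R * ((2 * (2 * Bz + ln (real CARD('J)))) * norm (\<chi> (i::'J) (j::'N). (1::real))))
      + M1 * (R * ((4 * (1 + (2 * Bz + ln (real CARD('J))) * exp (4 * Bz)) * norm (\<chi> (i::'J) (j::'N). (1::real))) * (R * M1))))"
proof -
  note sf = sigokD[OF s]
  have Bz: "0 \<le> Bz" using sf(6) R unfolding Bz_def by simp
  have p1: "0 \<le> 2 * (2 * Bz + ln (real CARD('J))) * norm (\<chi> (i::'J) (j::'N). (1::real))"
    using Bz by simp
  have p2: "0 \<le> 4 * (1 + (2 * Bz + ln (real CARD('J))) * exp (4 * Bz)) * norm (\<chi> (i::'J) (j::'N). (1::real))"
    using Bz by simp
  have Bzd: "R * (M0 * norm (\<chi> (i::'M) (j::'N). (1::real))) \<le> Bz" unfolding Bz_def by simp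
  show ?thesis
    by (rule Tsig[OF sf(1-8) deriv_Loss[OF A] DL_bound[OF A] DL_lip[OF A] E Bzd p1 p2 R])
qed

lemma T4:
  fixes s :: "real^'N^'M" and A :: "real^'N^'J"
  assumes A: "onehot_cols A" and sb: "norm s \<le> Bs" and R: "0 \<le> R"
  defines "Bz \<equiv> R * Bs"
  shows "lipgrad (\<lambda>V::real^'M^'J. (norm (Lvec (V ** s) A))^2) (cball 0 R)
     ((4 * (1 + (2 * Bz + ln (real CARD('J))) * exp (4 * Bz)) * norm (\<chi> (i::'J) (j::'N). (1::real))) * (Bs * Bs))"
proof (rule mk_lipgrad[where G="\<lambda>V. DL A (V ** s) ** transpose s"])
  fix V :: "real^'M^'J"
  have "((\<lambda>V::real^'M^'J. V ** s) has_derivative (\<lambda>h. h ** s)) (at V)"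
    by (rule bounded_linear_imp_has_derivative[OF bl_rmul])
  from has_derivative_compose[OF this deriv_Loss[OF A]]
  show "((\<lambda>V. (norm (Lvec (V ** s) A))^2) has_derivative (\<lambda>h. (DL A (V ** s) ** transpose s) \<bullet> h)) (at V)"
    by (simp add: adj2)
next
  fix V V' :: "real^'M^'J" assume "V \<in> cball 0 R" "V' \<in> cball 0 R"
  hence VR: "norm V \<le> R" "norm V' \<le> R" by auto
  have Bs0: "0 \<le> Bs" using sb norm_ge_zero[of s] by linarith
  have zb: "norm (W ** s) \<le> Bz" if "norm W \<le> R" for W :: "real^'M^'J"
    using norm_mult_le[of W s] mult_mono[OF that sb] R Bs0 unfolding Bz_def by simp
  let ?K = "4 * (1 + (2 * Bz + ln (real CARD('J))) * exp (4 * Bz)) * norm (\<chi> (i::'J) (j::'N). (1::real))"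
  have K0: "0 \<le> ?K" using R Bs0 unfolding Bz_def by simp
  have "norm (DL A (V ** s) ** transpose s - DL A (V' ** s) ** transpose s)
       \<le> norm (DL A (V ** s) - DL A (V' ** s)) * norm (transpose s)"
    unfolding matrix_diff_rdistrib[symmetric] by (rule norm_mult_le)
  also have "\<dots> \<le> (?K * norm (V ** s - V' ** s)) * Bs"
    unfolding norm_transpose
    by (rule mult_mono[OF DL_lip[OF A zb[OF VR(1)] zb[OF VR(2)]] sb]) (use K0 in simp_all)
  also have "norm (V ** s - V' ** s) \<le> norm (V - V') * Bs"
    unfolding matrix_diff_rdistrib[symmetric] using norm_mult_le[of "V - V'" s] mult_left_mono[OF sb, of "norm (V - V')"]
    by simp
  hence "(?K * norm (V ** s - V' ** s)) * Bs \<le> (?K * (norm (V - V') * Bs)) * Bs"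
    using K0 Bs0 by (simp add: mult_left_mono mult_right_mono)
  finally show "norm (DL A (V ** s) ** transpose s - DL A (V' ** s) ** transpose s) \<le> ?K * (Bs * Bs) * norm (V - V')"
    by (simp add: mult_ac)
qed

lemma prod_bound:
  fixes W :: "nat \<Rightarrow> real^'M^'M"
  assumes "\<forall>j\<in>I. norm (W j) \<le> R" "finite I" "0 \<le> R"
  shows "0 \<le> (\<Prod>j\<in>I. (norm (W j))^2) \<and> (\<Prod>j\<in>I. (norm (W j))^2) \<le> (max 1 R)^(2 * card I)"
proof
  show "0 \<le> (\<Prod>j\<in>I. (norm (W j))^2)" by (simp add: prod_nonneg)
  have "(\<Prod>j\<in>I. (norm (W j))^2) \<le> (\<Prod>j\<in>I. (max 1 R)^2)"
  proof (rule prod_mono)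
    fix j assume "j \<in> I"
    hence "norm (W j) \<le> max 1 R" using assms(1) by fastforce
    thus "0 \<le> (norm (W j))^2 \<and> (norm (W j))^2 \<le> (max 1 R)^2" by (simp add: power_mono)
  qed
  also have "\<dots> = (max 1 R)^(2 * card I)" by (simp add: power_mult[symmetric] mult.commute)
  finally show "(\<Prod>j\<in>I. (norm (W j))^2) \<le> (max 1 R)^(2 * card I)" .
qed

lemma prodW_bound:
  fixes W :: "nat \<Rightarrow> real^'M^'M"
  assumes "\<forall>j\<in>{2..L-1}. norm (W j) \<le> R" "1 \<le> k" "0 \<le> R"
  shows "0 \<le> (\<Prod>j\<in>{k+1..L-1}. (norm (W j))^2) \<and> (\<Prod>j\<in>{k+1..L-1}. (norm (W j))^2) \<le> (max 1 R)^(2 * L)"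
proof -
  have sub: "\<forall>j\<in>{k+1..L-1}. norm (W j) \<le> R" using assms(1,2) by auto
  note pb = prod_bound[OF sub finite_atLeastAtMost assms(3)]
  have "(max 1 R)^(2 * card {k+1..L-1}) \<le> (max 1 R)^(2 * L)"
    by (rule power_increasing) auto
  thus ?thesis using pb by linarith
qed

lemma omega_bound:
  fixes W :: "nat \<Rightarrow> real^'M^'M" and WL :: "real^'M^'J"
  assumes "\<forall>j\<in>{2..L-1}. norm (W j) \<le> R" "norm WL \<le> R" "1 \<le> k" "0 \<le> R" "2 \<le> L"
  shows "\<bar>omega L W WL k\<bar> \<le> (max 1 R)^(2 * L)"
proof -
  have sub: "\<forall>j\<in>{k+1..L-1}. norm (W j) \<le> R" using assms(1,3) by auto
  note pb = prod_bound[OF sub finite_atLeastAtMost assms(4)]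
  have c: "card {k+1..L-1} + 1 \<le> L" using assms(3,5) by simp
  have w: "(norm WL)^2 \<le> (max 1 R)^2" using assms(2) by (simp add: power_mono)
  have "omega L W WL k \<le> (max 1 R)^2 * (max 1 R)^(2 * card {k+1..L-1})"
    unfolding omega_def by (rule mult_mono[OF w]) (use pb in auto)
  also have "\<dots> = (max 1 R)^(2 * (card {k+1..L-1} + 1))" by (simp add: power_add[symmetric])
  also have "\<dots> \<le> (max 1 R)^(2 * L)" by (rule power_increasing) (use c in auto)
  finally show ?thesis using pb unfolding omega_def by simp
qed

lemma tbound:
  fixes E :: "real^'n^'m" and Y :: "real^'p^'n"
  assumes "norm E \<le> R" "norm Y \<le> Yb" "norm P \<le> Bp" "norm Q \<le> Bq" "0 \<le> R"
  shows "(norm (E ** Y + P - Q))^2 \<le> (R * Yb + Bp + Bq)^2"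
proof -
  have "norm (E ** Y + P - Q) \<le> norm (E ** Y + P) + norm Q" by (rule norm_triangle_ineq4)
  moreover have "norm (E ** Y + P) \<le> norm (E ** Y) + norm P" by (rule norm_triangle_ineq)
  moreover have "norm (E ** Y) \<le> norm E * norm Y" by (rule norm_mult_le)
  moreover have "norm E * norm Y \<le> R * Yb" by (rule mult_mono) (use assms in auto)
  ultimately have "norm (E ** Y + P - Q) \<le> R * Yb + Bp + Bq" using assms by linarith
  thus ?thesis by (rule power_mono) simp
qed

lemma bias_bound:
  assumes "norm b \<le> R"
  shows "norm (bias b :: real^'n^'m) \<le> sqrt (real CARD('n)) * R"
  unfolding norm_bias by (rule mult_left_mono[OF assms]) simp

lemma sigm_bound:
  assumes "sigok \<sigma> \<sigma>' M0 M1 M2"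
  shows "norm (sigm \<sigma> (y::real^'n^'m)) \<le> M0 * norm (\<chi> (i::'m) (j::'n). (1::real))"
  by (rule norm_entry_bound) (use sigokD[OF assms] in \<open>auto simp: sigm_def\<close>)

theorem lemma3p3:
  fixes \<sigma> \<sigma>' \<sigma>'' :: "real \<Rightarrow> real"
    and X :: "real^'N^'d" and A :: "real^'N^'J"
    and L :: nat and M0 M1 M2 R :: real
  assumes L: "L \<ge> 2"
    and J: "CARD('J) \<ge> 2"
    and A: "onehot_cols A"
    and d1: "\<And>z. (\<sigma> has_real_derivative \<sigma>' z) (at z)"
    and d2: "\<And>z. (\<sigma>' has_real_derivative \<sigma>'' z) (at z)"
    and c2: "continuous_on UNIV \<sigma>''"
    and M: "M0 > 0" "M1 > 0" "M2 > 0"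
    and b0: "\<And>z. \<bar>\<sigma> z\<bar> \<le> M0"
    and b1: "\<And>z. \<bar>\<sigma>' z\<bar> \<le> M1"
    and b2: "\<And>z. \<bar>\<sigma>'' z\<bar> \<le> M2"
    and R: "R > 0"
  shows "\<exists>C :: nat \<Rightarrow> real. (\<forall>l\<in>{1..L}. C l > 0) \<and>
    (\<forall>(W1 :: real^'d^'M) (W :: nat \<Rightarrow> real^'M^'M) (WL :: real^'M^'J)
        (b :: nat \<Rightarrow> real^'M) (c :: nat \<Rightarrow> real^'N^'M).
      norm W1 \<le> R \<and> (\<forall>l\<in>{2..L-1}. norm (W l) \<le> R) \<and> norm WL \<le> R \<and>
      (\<forall>l\<in>{1..L-1}. norm (b l) \<le> R \<and> norm (c l) \<le> R) \<longrightarrow>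
      (\<forall>l\<in>{1..L-1}.
         (\<forall>x. ((\<lambda>y. Sobj \<sigma> X A L W1 W WL b (c(l := y))) has_derivative
                 (\<lambda>h. grad (\<lambda>y. Sobj \<sigma> X A L W1 W WL b (c(l := y))) x \<bullet> h)) (at x)) \<and>
         (\<forall>ch ct. norm (grad (\<lambda>y. Sobj \<sigma> X A L W1 W WL b (c(l := y))) ch
                      - grad (\<lambda>y. Sobj \<sigma> X A L W1 W WL b (c(l := y))) ct)
                  \<le> C l * norm (ch - ct))) \<and>
      (\<forall>x. norm x \<le> R \<longrightarrow>
         ((\<lambda>V. Sobj \<sigma> X A L W1 W V b c) has_derivative
            (\<lambda>h. grad (\<lambda>V. Sobj \<sigma> X A L W1 W V b c) x \<bullet> h)) (at x)) \<and>
      (\<forall>Wh Wt. norm Wh \<le> R \<and> norm Wt \<le> R \<longrightarrow>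
         norm (grad (\<lambda>V. Sobj \<sigma> X A L W1 W V b c) Wh - grad (\<lambda>V. Sobj \<sigma> X A L W1 W V b c) Wt)
           \<le> C L * norm (Wh - Wt)))"
proof -
  have sok: "sigok \<sigma> \<sigma>' M0 M1 M2"
    unfolding sigok_def using d1 lip_of_deriv[OF d1 b1] lip_of_deriv[OF d2 b2] b0 b1 M by auto
  have R0: "0 \<le> R" using R by simp
  note sf = sigokD[OF sok]
  define R1 where "R1 = (max 1 R)^(2*L)"
  define oMN where "oMN = norm (\<chi> (i::'M) (j::'N). (1::real))"
  define oJN where "oJN = norm (\<chi> (i::'J) (j::'N). (1::real))"
  define sN where "sN = sqrt (real CARD('N))"
  define K2 where "K2 = M2 * (R * (2 * (R * (M0 * oMN) + sN * R + R))) + M1 * (R * (2 * (R * M1)))"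
  define Bz3 where "Bz3 = R * (M0 * oMN)"
  define K3 where "K3 = M2 * (R * ((2 * (2 * Bz3 + ln (real CARD('J)))) * oJN))
      + M1 * (R * ((4 * (1 + (2 * Bz3 + ln (real CARD('J))) * exp (4 * Bz3)) * oJN) * (R * M1)))"
  define C1 where "C1 = K3 + real L * (R1 * (K2 + 2)) + 1"
  define Bs where "Bs = M0 * oMN"
  define K4 where "K4 = (4 * (1 + (2 * (R * Bs) + ln (real CARD('J))) * exp (4 * (R * Bs))) * oJN) * (Bs * Bs)"
  define Tb where "Tb = R * (M0 * oMN) + sN * R + R + R * norm X"
  define Kk where "Kk = R1 * Tb^2"
  define CL where "CL = K4 + real L * (2 * Kk) + 1"
  have R1: "1 \<le> R1" unfolding R1_def by simp
  have oMN0: "0 \<le> oMN" "0 \<le> oJN" unfolding oMN_def oJN_def by simp_all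
  have sN0: "0 \<le> sN" unfolding sN_def by simp
  have K20: "0 \<le> K2" unfolding K2_def using sf(6-8) R0 oMN0 sN0 by simp
  have Bz30: "0 \<le> Bz3" unfolding Bz3_def using sf(6) R0 oMN0 by simp
  have K30: "0 \<le> K3" unfolding K3_def using sf(6-8) R0 oMN0 Bz30 by simp
  have Bs0: "0 \<le> Bs" unfolding Bs_def using sf(6) oMN0 by simp
  have K40: "0 \<le> K4" unfolding K4_def using Bs0 R0 oMN0 by simp
  have Kk0: "0 \<le> Kk" unfolding Kk_def using R1 by simp
  have "0 \<le> real L * (R1 * (K2 + 2))" using K20 R1 by simp
  hence C1pos: "0 < C1" unfolding C1_def using K30 by linarith
  have "0 \<le> real L * (2 * Kk)" using Kk0 by simp
  hence CLpos: "0 < CL" unfolding CL_def using K40 by linarith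
  have card2: "real (card {2..L-1}) + 1 \<le> real L" using L by simp
  have part1: "lipgrad (\<lambda>y. Sobj \<sigma> X A L W1 W WL b (c(l := y))) UNIV C1"
    if W1b: "norm W1 \<le> R" and Wb: "\<forall>l\<in>{2..L-1}. norm (W l) \<le> R" and WLb: "norm WL \<le> R"
      and bcb: "\<forall>l\<in>{1..L-1}. norm (b l) \<le> R \<and> norm (c l) \<le> R" and l: "l \<in> {1..L-1}"
    for W1 :: "real^'d^'M" and W :: "nat \<Rightarrow> real^'M^'M" and WL :: "real^'M^'J"
      and b :: "nat \<Rightarrow> real^'M" and c :: "nat \<Rightarrow> real^'N^'M" and l
  proof -
    have L1: "lipgrad (\<lambda>y. (norm (Lvec (WL ** sigm \<sigma> ((c(l := y)) (L - 1))) A))^2) UNIV K3"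
    proof (cases "l = L - 1")
      case True
      have "lipgrad (\<lambda>y. (norm (Lvec (WL ** sigm \<sigma> y) A))^2) UNIV K3"
        using T3[OF sok A WLb R0] by (rule lipgrad_mono) (simp add: K3_def Bz3_def oMN_def oJN_def)
      thus ?thesis using True by simp
    next
      case False
      hence "(\<lambda>y. (norm (Lvec (WL ** sigm \<sigma> ((c(l := y)) (L - 1))) A))^2) = (\<lambda>y. (norm (Lvec (WL ** sigm \<sigma> (c (L - 1))) A))^2)"
        by (simp add: fun_eq_iff)
      thus ?thesis using lipgrad_mono[OF lipgrad_const K30] by simp
    qed
    have tk: "lipgrad (\<lambda>y. (norm (W k ** sigm \<sigma> ((c(l := y)) (k - 1)) + bias (b k) - (c(l := y)) k))^2) UNIV (K2 + 2)"
      if k: "k \<in> {2..L-1}" for k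
    proof (cases "k - 1 = l")
      case True
      hence kl: "k \<noteq> l" using k by auto
      have eq: "(\<lambda>y. (norm (W k ** sigm \<sigma> ((c(l := y)) (k - 1)) + bias (b k) - (c(l := y)) k))^2)
          = (\<lambda>y. (norm (W k ** sigm \<sigma> y + bias (b k) - c k))^2)"
        using True kl by (simp add: fun_eq_iff)
      have kk: "k \<in> {1..L-1}" "k - 1 \<in> {1..L-1}" using k by auto
      have "lipgrad (\<lambda>y. (norm (W k ** sigm \<sigma> y + bias (b k) - c k))^2) UNIV K2"
        using T2[OF sok _ bias_bound[of "b k" R] _ R0, of "W k" "c k"] Wb k bcb kk
        unfolding K2_def oMN_def sN_def by auto
      thus ?thesis unfolding eq by (rule lipgrad_mono) simp
    next
      case False
      show ?thesis
      proof (cases "k = l")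
        case True
        have eq: "(\<lambda>y. (norm (W k ** sigm \<sigma> ((c(l := y)) (k - 1)) + bias (b k) - (c(l := y)) k))^2)
          = (\<lambda>y. (norm ((W k ** sigm \<sigma> (c (k - 1)) + bias (b k)) - y))^2)"
          using True False by (simp add: fun_eq_iff)
        show ?thesis unfolding eq by (rule lipgrad_mono[OF T1]) (use K20 in simp)
      next
        case False2: False
        have eq: "(\<lambda>y. (norm (W k ** sigm \<sigma> ((c(l := y)) (k - 1)) + bias (b k) - (c(l := y)) k))^2)
          = (\<lambda>y. (norm (W k ** sigm \<sigma> (c (k - 1)) + bias (b k) - c k))^2)"
          using False False2 by (simp add: fun_eq_iff)
        show ?thesis unfolding eq by (rule lipgrad_mono[OF lipgrad_const]) (use K20 in simp)
      qed
    qed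
    have L2: "lipgrad (\<lambda>y. \<Sum>k\<in>{2..L-1}. omega L W WL k * (norm (W k ** sigm \<sigma> ((c(l := y)) (k - 1)) + bias (b k) - (c(l := y)) k))^2)
        UNIV (real (card {2..L-1}) * (R1 * (K2 + 2)))"
    proof (rule lipgrad_sum)
      fix k assume k: "k \<in> {2..L-1}"
      have "\<bar>omega L W WL k\<bar> \<le> R1" unfolding R1_def by (rule omega_bound[OF Wb WLb _ R0 L]) (use k in auto)
      thus "lipgrad (\<lambda>y. omega L W WL k * (norm (W k ** sigm \<sigma> ((c(l := y)) (k - 1)) + bias (b k) - (c(l := y)) k))^2) UNIV (R1 * (K2 + 2))"
        by (rule lipgrad_scale[OF tk[OF k]]) (use K20 in simp)
    qed (use R1 K20 in simp_all)
    have t1: "lipgrad (\<lambda>y. (norm (W1 ** X + bias (b 1) - (c(l := y)) 1))^2) UNIV (K2 + 2)"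
    proof (cases "l = 1")
      case True
      show ?thesis using True by simp (rule lipgrad_mono[OF T1], use K20 in simp)
    next
      case False
      hence eq: "(\<lambda>y. (norm (W1 ** X + bias (b 1) - (c(l := y)) 1))^2) = (\<lambda>y. (norm (W1 ** X + bias (b 1) - c 1))^2)"
        by (simp add: fun_eq_iff)
      show ?thesis unfolding eq by (rule lipgrad_mono[OF lipgrad_const]) (use K20 in simp)
    qed
    have L3: "lipgrad (\<lambda>y. omega L W WL 1 * (norm (W1 ** X + bias (b 1) - (c(l := y)) 1))^2) UNIV (R1 * (K2 + 2))"
    proof (rule lipgrad_scale[OF t1])
      show "\<bar>omega L W WL 1\<bar> \<le> R1" unfolding R1_def by (rule omega_bound[OF Wb WLb _ R0 L]) simp
    qed (use K20 in simp)
    have tot: "K3 + real (card {2..L-1}) * (R1 * (K2 + 2)) + R1 * (K2 + 2) \<le> C1"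
    proof -
      have "real (card {2..L-1}) * (R1 * (K2 + 2)) + R1 * (K2 + 2) = (real (card {2..L-1}) + 1) * (R1 * (K2 + 2))"
        by (simp add: algebra_simps)
      also have "\<dots> \<le> real L * (R1 * (K2 + 2))" by (rule mult_right_mono[OF card2]) (use R1 K20 in simp)
      finally show ?thesis unfolding C1_def by linarith
    qed
    show ?thesis
      unfolding Sobj_def by (rule lipgrad_mono[OF lipgrad_add[OF lipgrad_add[OF L1 L2] L3] tot])
  qed
  have part2: "lipgrad (\<lambda>V::real^'M^'J. Sobj \<sigma> X A L W1 W V b c) (cball 0 R) CL"
    if W1b: "norm W1 \<le> R" and Wb: "\<forall>l\<in>{2..L-1}. norm (W l) \<le> R"
      and bcb: "\<forall>l\<in>{1..L-1}. norm (b l) \<le> R \<and> norm (c l) \<le> R"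
    for W1 :: "real^'d^'M" and W :: "nat \<Rightarrow> real^'M^'M"
      and b :: "nat \<Rightarrow> real^'M" and c :: "nat \<Rightarrow> real^'N^'M"
  proof -
    define Pk where "Pk k = (\<Prod>j\<in>{k+1..L-1}. (norm (W j))^2)" for k
    define tt where "tt k = (norm (W k ** sigm \<sigma> (c (k - 1)) + bias (b k) - c k))^2" for k
    define t1 where "t1 = (norm (W1 ** X + bias (b 1) - c 1))^2"
    have eq: "(\<lambda>V. Sobj \<sigma> X A L W1 W V b c) = (\<lambda>V. (norm (Lvec (V ** sigm \<sigma> (c (L - 1))) A))^2
        + (\<Sum>k\<in>{2..L-1}. (norm V)^2 * (Pk k * tt k)) + (norm V)^2 * (Pk 1 * t1))"
      by (simp add: fun_eq_iff Sobj_def omega_def Pk_def tt_def t1_def mult.assoc)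
    have Lo: "lipgrad (\<lambda>V. (norm (Lvec (V ** sigm \<sigma> (c (L - 1))) A))^2) (cball 0 R) K4"
    proof -
      have sb: "norm (sigm \<sigma> (c (L - 1))) \<le> Bs" unfolding Bs_def oMN_def by (rule sigm_bound[OF sok])
      show ?thesis using T4[OF A sb R0] by (rule lipgrad_mono) (simp add: K4_def oJN_def)
    qed
    have Pkb: "0 \<le> Pk k \<and> Pk k \<le> R1" if "1 \<le> k" for k
      unfolding Pk_def R1_def by (rule prodW_bound[OF Wb that R0])
    have ttb: "0 \<le> tt k \<and> tt k \<le> Tb^2" if k: "k \<in> {2..L-1}" for k
    proof -
      have kk: "k \<in> {1..L-1}" "k - 1 \<in> {1..L-1}" using k by auto
      have "tt k \<le> (R * (M0 * oMN) + sN * R + R)^2"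
        unfolding tt_def oMN_def sN_def
        by (rule tbound[OF _ sigm_bound[OF sok] bias_bound _ R0]) (use Wb bcb k kk in auto)
      also have "\<dots> \<le> Tb^2" unfolding Tb_def
        by (rule power_mono) (use R0 sf(6) oMN0 sN0 in simp_all)
      finally show ?thesis unfolding tt_def by simp
    qed
    have t1b: "0 \<le> t1 \<and> t1 \<le> Tb^2"
    proof -
      have b1: "1 \<in> {1..L-1}" using L by auto
      have "t1 \<le> (R * norm X + sN * R + R)^2"
        unfolding t1_def sN_def
        by (rule tbound[OF W1b order_refl bias_bound _ R0]) (use bcb b1 in auto)
      also have "\<dots> \<le> Tb^2" unfolding Tb_def
        by (rule power_mono) (use R0 sf(6) oMN0 sN0 in simp_all)
      finally show ?thesis unfolding t1_def by simp
    qed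
    have kap: "\<bar>Pk k * x\<bar> \<le> Kk" if "1 \<le> k" "0 \<le> x" "x \<le> Tb^2" for k x
    proof -
      have "Pk k * x \<le> R1 * Tb^2" by (rule mult_mono) (use Pkb[OF that(1)] that R1 in auto)
      moreover have "0 \<le> Pk k * x" using Pkb[OF that(1)] that by simp
      ultimately show ?thesis unfolding Kk_def by simp
    qed
    have S2: "lipgrad (\<lambda>V. \<Sum>k\<in>{2..L-1}. (norm V)^2 * (Pk k * tt k)) (cball 0 R) (real (card {2..L-1}) * (2 * Kk))"
    proof (rule lipgrad_sum)
      fix k assume k: "k \<in> {2..L-1}"
      show "lipgrad (\<lambda>V. (norm V)^2 * (Pk k * tt k)) (cball 0 R) (2 * Kk)"
        by (rule T5, rule kap) (use ttb[OF k] k in auto)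
    qed (use Kk0 in simp_all)
    have S3: "lipgrad (\<lambda>V. (norm V)^2 * (Pk 1 * t1)) (cball 0 R) (2 * Kk)"
      by (rule T5, rule kap) (use t1b in auto)
    have tot: "K4 + real (card {2..L-1}) * (2 * Kk) + 2 * Kk \<le> CL"
    proof -
      have "real (card {2..L-1}) * (2 * Kk) + 2 * Kk = (real (card {2..L-1}) + 1) * (2 * Kk)"
        by (simp add: algebra_simps)
      also have "\<dots> \<le> real L * (2 * Kk)" by (rule mult_right_mono[OF card2]) (use Kk0 in simp)
      finally show ?thesis unfolding CL_def by linarith
    qed
    show ?thesis
      unfolding eq by (rule lipgrad_mono[OF lipgrad_add[OF lipgrad_add[OF Lo S2] S3] tot])
  qed
  show ?thesis
  proof (rule exI[where x="\<lambda>l. if l = L then CL else C1"], rule conjI)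
    show "\<forall>l\<in>{1..L}. 0 < (if l = L then CL else C1)" using C1pos CLpos by simp
  next
    show "\<forall>(W1 :: real^'d^'M) (W :: nat \<Rightarrow> real^'M^'M) (WL :: real^'M^'J)
        (b :: nat \<Rightarrow> real^'M) (c :: nat \<Rightarrow> real^'N^'M).
      norm W1 \<le> R \<and> (\<forall>l\<in>{2..L-1}. norm (W l) \<le> R) \<and> norm WL \<le> R \<and>
      (\<forall>l\<in>{1..L-1}. norm (b l) \<le> R \<and> norm (c l) \<le> R) \<longrightarrow>
      (\<forall>l\<in>{1..L-1}.
         (\<forall>x. ((\<lambda>y. Sobj \<sigma> X A L W1 W WL b (c(l := y))) has_derivative
                 (\<lambda>h. grad (\<lambda>y. Sobj \<sigma> X A L W1 W WL b (c(l := y))) x \<bullet> h)) (at x)) \<and>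
         (\<forall>ch ct. norm (grad (\<lambda>y. Sobj \<sigma> X A L W1 W WL b (c(l := y))) ch
                      - grad (\<lambda>y. Sobj \<sigma> X A L W1 W WL b (c(l := y))) ct)
                  \<le> (if l = L then CL else C1) * norm (ch - ct))) \<and>
      (\<forall>x. norm x \<le> R \<longrightarrow>
         ((\<lambda>V. Sobj \<sigma> X A L W1 W V b c) has_derivative
            (\<lambda>h. grad (\<lambda>V. Sobj \<sigma> X A L W1 W V b c) x \<bullet> h)) (at x)) \<and>
      (\<forall>Wh Wt. norm Wh \<le> R \<and> norm Wt \<le> R \<longrightarrow>
         norm (grad (\<lambda>V. Sobj \<sigma> X A L W1 W V b c) Wh - grad (\<lambda>V. Sobj \<sigma> X A L W1 W V b c) Wt)
           \<le> (if L = L then CL else C1) * norm (Wh - Wt))"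
    proof (intro allI impI)
      fix W1 :: "real^'d^'M" and W :: "nat \<Rightarrow> real^'M^'M" and WL :: "real^'M^'J"
        and b :: "nat \<Rightarrow> real^'M" and c :: "nat \<Rightarrow> real^'N^'M"
      assume H: "norm W1 \<le> R \<and> (\<forall>l\<in>{2..L-1}. norm (W l) \<le> R) \<and> norm WL \<le> R \<and>
        (\<forall>l\<in>{1..L-1}. norm (b l) \<le> R \<and> norm (c l) \<le> R)"
      have p2: "lipgrad (\<lambda>V. Sobj \<sigma> X A L W1 W V b c) (cball 0 R) CL" using part2 H by blast
      have q1: "\<forall>l\<in>{1..L-1}.
         (\<forall>x. ((\<lambda>y. Sobj \<sigma> X A L W1 W WL b (c(l := y))) has_derivative
                 (\<lambda>h. grad (\<lambda>y. Sobj \<sigma> X A L W1 W WL b (c(l := y))) x \<bullet> h)) (at x)) \<and>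
         (\<forall>ch ct. norm (grad (\<lambda>y. Sobj \<sigma> X A L W1 W WL b (c(l := y))) ch
                      - grad (\<lambda>y. Sobj \<sigma> X A L W1 W WL b (c(l := y))) ct)
                  \<le> (if l = L then CL else C1) * norm (ch - ct))"
      proof
        fix l assume l: "l \<in> {1..L-1}"
        hence "l \<noteq> L" using L by auto
        moreover have "lipgrad (\<lambda>y. Sobj \<sigma> X A L W1 W WL b (c(l := y))) UNIV C1" using part1 H l by blast
        ultimately show "(\<forall>x. ((\<lambda>y. Sobj \<sigma> X A L W1 W WL b (c(l := y))) has_derivative
                 (\<lambda>h. grad (\<lambda>y. Sobj \<sigma> X A L W1 W WL b (c(l := y))) x \<bullet> h)) (at x)) \<and>
           (\<forall>ch ct. norm (grad (\<lambda>y. Sobj \<sigma> X A L W1 W WL b (c(l := y))) ch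
                      - grad (\<lambda>y. Sobj \<sigma> X A L W1 W WL b (c(l := y))) ct)
                  \<le> (if l = L then CL else C1) * norm (ch - ct))"
          unfolding lipgrad_def by simp
      qed
      have q2: "\<forall>x. norm x \<le> R \<longrightarrow>
         ((\<lambda>V. Sobj \<sigma> X A L W1 W V b c) has_derivative
            (\<lambda>h. grad (\<lambda>V. Sobj \<sigma> X A L W1 W V b c) x \<bullet> h)) (at x)"
        using p2 unfolding lipgrad_def by blast
      have q3: "\<forall>Wh Wt. norm Wh \<le> R \<and> norm Wt \<le> R \<longrightarrow>
         norm (grad (\<lambda>V. Sobj \<sigma> X A L W1 W V b c) Wh - grad (\<lambda>V. Sobj \<sigma> X A L W1 W V b c) Wt)
           \<le> (if L = L then CL else C1) * norm (Wh - Wt)"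
        using p2 unfolding lipgrad_def by (simp add: dist_norm)
      show "(\<forall>l\<in>{1..L-1}.
         (\<forall>x. ((\<lambda>y. Sobj \<sigma> X A L W1 W WL b (c(l := y))) has_derivative
                 (\<lambda>h. grad (\<lambda>y. Sobj \<sigma> X A L W1 W WL b (c(l := y))) x \<bullet> h)) (at x)) \<and>
         (\<forall>ch ct. norm (grad (\<lambda>y. Sobj \<sigma> X A L W1 W WL b (c(l := y))) ch
                      - grad (\<lambda>y. Sobj \<sigma> X A L W1 W WL b (c(l := y))) ct)
                  \<le> (if l = L then CL else C1) * norm (ch - ct))) \<and>
      (\<forall>x. norm x \<le> R \<longrightarrow>
         ((\<lambda>V. Sobj \<sigma> X A L W1 W V b c) has_derivative
            (\<lambda>h. grad (\<lambda>V. Sobj \<sigma> X A L W1 W V b c) x \<bullet> h)) (at x)) \<and>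
      (\<forall>Wh Wt. norm Wh \<le> R \<and> norm Wt \<le> R \<longrightarrow>
         norm (grad (\<lambda>V. Sobj \<sigma> X A L W1 W V b c) Wh - grad (\<lambda>V. Sobj \<sigma> X A L W1 W V b c) Wt)
           \<le> (if L = L then CL else C1) * norm (Wh - Wt))"
        using q1 q2 q3 by blast
    qed
  qed
qed

end
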